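(* For any two distinct jobs $i,j$ and any time $t\ge 0$, we have $i\prec_{l(t)} j$ if and only if $\varphi_i(t)>\varphi_j(t)$.
   Context: Each job $j$ has processing time $p_j>0$ and weight $w_j>0$; jobs are processed on a single machine consecutively, job $j$ having completion time $C_j$, and the cost of a schedule is $\sum_j -w_j/C_j$ (to be minimized). For $t\ge0$, $\varphi_j(t)=\frac{w_j}{p_j(p_j+t)}$. Local dominance: $i\prec_{l(t)} j$ means that if job $j$ starts at time $t$ and is immediately followed by job $i$, then exchanging the positions of $i$ and $j$ (so that $i$ starts at $t$ and is immediately followed by $j$) strictly decreases the cost; since the completion times of all other jobs are unchanged, this means $\frac{w_i}{t+p_i}+\frac{w_j}{t+p_i+p_j}>\frac{w_j}{t+p_j}+\frac{w_i}{t+p_i+p_j}$. *)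

theory Defs
  imports Complex_Main
begin

text \<open>Jobs are elements of a type 'j; p j is the processing time, w j the weight.\<close>

definition phi :: "('j \<Rightarrow> real) \<Rightarrow> ('j \<Rightarrow> real) \<Rightarrow> 'j \<Rightarrow> real \<Rightarrow> real" where
  "phi p w j t = w j / (p j * (p j + t))"

text \<open>Local dominance i \<prec>_{l(t)} j: with j starting at t immediately followed by i,
  swapping i and j strictly decreases the cost sum of -w_k/C_k (other completion
  times unchanged).\<close>
definition local_dom :: "('j \<Rightarrow> real) \<Rightarrow> ('j \<Rightarrow> real) \<Rightarrow> real \<Rightarrow> 'j \<Rightarrow> 'j \<Rightarrow> bool" where
  "local_dom p w t i j \<longleftrightarrow>
     (- w i / (t + p i) - w j / (t + p i + p j)) < (- w j / (t + p j) - w i / (t + p j + p i))"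

end

theory Submission
  imports Defs
begin

lemma aux:
  fixes a b x y t :: real
  assumes a: "a > 0" and b: "b > 0" and t: "t \<ge> 0"
  shows "(- x / (t + a) - y / (t + a + b) < - y / (t + b) - x / (t + b + a))
     \<longleftrightarrow> y / (b * (b + t)) < x / (a * (a + t))"
proof -
  have ta: "t + a > 0" and tb: "t + b > 0" and T: "t + a + b > 0" using a b t by auto
  have e1: "t + b + a = t + a + b" by simp
  have "(- x / (t + a) - y / (t + a + b) < - y / (t + b) - x / (t + b + a))
     \<longleftrightarrow> y * (1/(t+b) - 1/(t+a+b)) < x * (1/(t+a) - 1/(t+a+b))"
    unfolding e1 by (simp add: field_simps)
  also have "1/(t+b) - 1/(t+a+b) = a / ((t+b)*(t+a+b))" using tb T by (simp add: field_simps)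
  also have "1/(t+a) - 1/(t+a+b) = b / ((t+a)*(t+a+b))" using ta T by (simp add: field_simps)
  also have "(y * (a / ((t+b)*(t+a+b))) < x * (b / ((t+a)*(t+a+b))))
      \<longleftrightarrow> y * a * (t+a) < x * b * (t+b)"
  proof -
    define D where "D = (t+a)*(t+b)*(t+a+b)"
    have D: "D > 0" using ta tb T by (simp add: D_def)
    have n1: "(t+b)*(t+a+b) \<noteq> 0" and n2: "(t+a)*(t+a+b) \<noteq> 0" using ta tb T by auto
    have l: "y * (a / ((t+b)*(t+a+b))) * D = y * a * (t+a)"
    proof -
      have "D = (t+a) * ((t+b)*(t+a+b))" by (simp add: D_def mult.assoc)
      thus ?thesis using n1 by simp
    qed
    have r: "x * (b / ((t+a)*(t+a+b))) * D = x * b * (t+b)"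
    proof -
      have "D = (t+b) * ((t+a)*(t+a+b))" by (simp add: D_def mult.assoc mult.commute mult.left_commute)
      thus ?thesis using n2 by simp
    qed
    show ?thesis using mult_less_cancel_right_pos[OF D, of "y * (a / ((t+b)*(t+a+b)))" "x * (b / ((t+a)*(t+a+b)))"]
      unfolding l r by simp
  qed
  also have "\<dots> \<longleftrightarrow> y / (b * (b + t)) < x / (a * (a + t))"
  proof -
    have A: "a * (a + t) > 0" and B: "b * (b + t) > 0" using a b ta tb by auto
    have "y / (b * (b + t)) < x / (a * (a + t)) \<longleftrightarrow> y * (a * (a + t)) < x * (b * (b + t))"
      using A B by (simp add: divide_less_eq less_divide_eq mult.commute mult.left_commute)
    thus ?thesis by (simp add: algebra_simps)
  qed
  finally show ?thesis .
qed

theorem lemma1: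
  fixes p w :: "'j \<Rightarrow> real" and i j :: 'j and t :: real
  assumes "\<And>k. p k > 0" and "\<And>k. w k > 0"
    and "i \<noteq> j" and "t \<ge> 0"
  shows "local_dom p w t i j \<longleftrightarrow> phi p w i t > phi p w j t"
  unfolding local_dom_def phi_def using aux[OF assms(1)[of i] assms(1)[of j] assms(4)] by simp

end
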